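(* For any $a,b,\alpha,\beta$ and any natural number $n\ge1$, \[ \Psi\left(\begin{array}{cc|c} a & b & n \\ \alpha & \beta & \lfloor n/2\rfloor \end{array}\right)=(-1)^{\lfloor n/2\rfloor}\Psi(\alpha,\beta,n),\qquad \Phi\left(\begin{array}{cc|c} a & b & n \\ \alpha & \beta & \lfloor (n-1)/2\rfloor \end{array}\right)=(-1)^{\lfloor (n-1)/2\rfloor}\Phi(\alpha,\beta,n). \]
   Context: $\delta(m)=1$ for $m$ odd, $0$ for $m$ even; $\lfloor\cdot\rfloor$ is the floor. $\Psi(a,b,n)$, $\Phi(a,b,n)$ are defined by $\Psi(a,b,0)=2$, $\Psi(a,b,1)=1$, $\Psi(a,b,n+1)=(2a-b)^{\delta(n)}\Psi(a,b,n)-a\Psi(a,b,n-1)$ and $\Phi(a,b,0)=0$, $\Phi(a,b,1)=1$, $\Phi(a,b,n+1)=(2a-b)^{\delta(n+1)}\Phi(a,b,n)-a\Phi(a,b,n-1)$. For indeterminates $a,b,\alpha,\beta$ and $n\ge1$, $\Psi\left(\begin{array}{cc|c} a & b & n \\ \alpha & \beta & r \end{array}\right)$ ($0\le r\le\lfloor n/2\rfloor$) and $\Phi\left(\begin{array}{cc|c} a & b & n \\ \alpha & \beta & r \end{array}\right)$ ($0\le r\le\lfloor (n-1)/2\rfloor$) are the unique polynomials in $\mathbb{Z}[a,b,\alpha,\beta]$ such that, identically in $x,y$, $(\beta a-\alpha b)^{\lfloor n/2\rfloor}\frac{x^n+y^n}{(x+y)^{\delta(n)}}=\sum_{r}\Psi\left(\begin{array}{cc|c}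 a & b & n \\ \alpha & \beta & r \end{array}\right)(\alpha x^2+\beta xy+\alpha y^2)^{\lfloor n/2\rfloor-r}(ax^2+bxy+ay^2)^r$ and $(\beta a-\alpha b)^{\lfloor (n-1)/2\rfloor}\frac{x^n-y^n}{(x-y)(x+y)^{\delta(n-1)}}=\sum_{r}\Phi\left(\begin{array}{cc|c} a & b & n \\ \alpha & \beta & r \end{array}\right)(\alpha x^2+\beta xy+\alpha y^2)^{\lfloor (n-1)/2\rfloor-r}(ax^2+bxy+ay^2)^r$. For numerical values of $a,b,\alpha,\beta$ they are evaluated. *)

theory Defs
  imports "HOL-Computational_Algebra.Polynomial"
begin

definition delta :: "nat \<Rightarrow> nat" where
  "delta m = (if odd m then 1 else 0)"

fun Psi :: "'a::comm_ring_1 \<Rightarrow> 'a \<Rightarrow> nat \<Rightarrow> 'a" where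
  "Psi a b 0 = 2"
| "Psi a b (Suc 0) = 1"
| "Psi a b (Suc (Suc n)) =
     (2*a - b) ^ delta (Suc n) * Psi a b (Suc n) - a * Psi a b n"

fun Phi :: "'a::comm_ring_1 \<Rightarrow> 'a \<Rightarrow> nat \<Rightarrow> 'a" where
  "Phi a b 0 = 0"
| "Phi a b (Suc 0) = 1"
| "Phi a b (Suc (Suc n)) =
     (2*a - b) ^ delta (Suc (Suc n)) * Phi a b (Suc n) - a * Phi a b n"

text \<open>The polynomial ring Z[a,b,alpha,beta], realised as nested univariate
  polynomials, and its four indeterminates.\<close>
type_synonym R4 = "int poly poly poly poly"

definition Xa :: R4 where "Xa = [:[:[:[:0, 1:]:]:]:]"
definition Xb :: R4 where "Xb = [:[:[:0, 1:]:]:]"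
definition Xalpha :: R4 where "Xalpha = [:[:0, 1:]:]"
definition Xbeta :: R4 where "Xbeta = [:0, 1:]"

text \<open>They are the unique coefficient families (indexed by r, zero outside the
  admissible range) satisfying the defining identity identically in x, y.
  The division by (x+y)^delta(n) (resp. (x-y)(x+y)^delta(n-1)) is cleared by
  multiplying both sides, which is equivalent over an integral domain.\<close>
definition Psi_coef :: "'a::comm_ring_1 \<Rightarrow> 'a \<Rightarrow> 'a \<Rightarrow> 'a \<Rightarrow> nat \<Rightarrow> nat \<Rightarrow> 'a" where
  "Psi_coef a b \<alpha> \<beta> n = (THE c. (\<forall>r. n div 2 < r \<longrightarrow> c r = 0) \<and>
     (\<forall>x y. (\<beta>*a - \<alpha>*b) ^ (n div 2) * (x^n + y^n) =
        (x + y) ^ delta n *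
        (\<Sum>r\<le>n div 2. c r * (\<alpha>*x^2 + \<beta>*x*y + \<alpha>*y^2) ^ (n div 2 - r)
                           * (a*x^2 + b*x*y + a*y^2) ^ r)))"

definition Phi_coef :: "'a::comm_ring_1 \<Rightarrow> 'a \<Rightarrow> 'a \<Rightarrow> 'a \<Rightarrow> nat \<Rightarrow> nat \<Rightarrow> 'a" where
  "Phi_coef a b \<alpha> \<beta> n = (THE c. (\<forall>r. (n - 1) div 2 < r \<longrightarrow> c r = 0) \<and>
     (\<forall>x y. (\<beta>*a - \<alpha>*b) ^ ((n - 1) div 2) * (x^n - y^n) =
        (x - y) * (x + y) ^ delta (n - 1) *
        (\<Sum>r\<le>(n - 1) div 2. c r * (\<alpha>*x^2 + \<beta>*x*y + \<alpha>*y^2) ^ ((n - 1) div 2 - r)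
                           * (a*x^2 + b*x*y + a*y^2) ^ r)))"

end

theory Submission imports Defs begin

definition hom :: "nat \<Rightarrow> 'a::comm_ring_1 poly \<Rightarrow> 'a \<Rightarrow> 'a \<Rightarrow> 'a" where
  "hom k G A B = (\<Sum>r\<le>k. coeff G r * A^(k-r) * B^r)"

lemma hom_add: "hom k (p + q) A B = hom k p A B + hom k q A B"
  by (simp add: hom_def algebra_simps sum.distrib)

lemma hom_diff: "hom k (p - q) A B = hom k p A B - hom k q A B"
  by (simp add: hom_def algebra_simps sum_subtractf)

lemma hom_smult_up:
  assumes "degree G \<le> k"
  shows "hom (Suc k) G A B = A * hom k G A B"
proof -
  have "coeff G (Suc k) = 0" using assms by (simp add: coeff_eq_0)
  then have "hom (Suc k) G A B = (\<Sum>r\<le>k. coeff G r * A^(Suc k-r) * B^r)"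
    by (simp add: hom_def)
  also have "\<dots> = (\<Sum>r\<le>k. A * (coeff G r * A^(k-r) * B^r))"
    by (rule sum.cong) (auto simp: Suc_diff_le)
  finally show ?thesis by (simp add: hom_def sum_distrib_left)
qed

lemma hom_shift: "hom (Suc k) (pCons 0 H) A B = B * hom k H A B"
  unfolding hom_def
  by (subst sum.atMost_Suc_shift) (simp add: sum_distrib_left algebra_simps)

lemma hom_smult: "hom k (smult u G) A B = u * hom k G A B"
  by (simp add: hom_def sum_distrib_left algebra_simps)

lemma hom_lin:
  assumes "degree G \<le> k"
  shows "hom (Suc k) ([:l, u:] * G) A B = (l * A + u * B) * hom k G A B"
  using assms by (simp add: hom_add hom_smult_up hom_shift hom_smult algebra_simps)

lemma hom_0: "hom 0 G A B = coeff G 0" by (simp add: hom_def)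

lemma twostep_induct:
  assumes "P 0" "P (Suc 0)" "\<And>k. P k \<Longrightarrow> P (Suc k) \<Longrightarrow> P (Suc (Suc k))"
  shows "P n"
proof -
  have "P n \<and> P (Suc n)" by (induction n) (use assms in auto)
  then show ?thesis by simp
qed

fun Gs :: "'a::comm_ring_1 \<Rightarrow> 'a \<Rightarrow> 'a \<Rightarrow> 'a \<Rightarrow> 'a poly \<Rightarrow> 'a poly \<Rightarrow> nat \<Rightarrow> 'a poly" where
  "Gs a b \<alpha> \<beta> G0 G1 0 = G0"
| "Gs a b \<alpha> \<beta> G0 G1 (Suc 0) = G1"
| "Gs a b \<alpha> \<beta> G0 G1 (Suc (Suc k)) =
     [:-b, \<beta>:] * Gs a b \<alpha> \<beta> G0 G1 (Suc k) - [:a, -\<alpha>:] * ([:a, -\<alpha>:] * Gs a b \<alpha> \<beta> G0 G1 k)"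

lemma Gs_degree:
  assumes "degree G0 = 0" "degree G1 \<le> 1"
  shows "degree (Gs a b \<alpha> \<beta> G0 G1 k) \<le> k"
proof (induction k rule: twostep_induct)
  case (3 k)
  let ?G = "Gs a b \<alpha> \<beta> G0 G1"
  have l1: "degree [:-b, \<beta>:] \<le> 1" "degree [:a, -\<alpha>:] \<le> 1" by auto
  have d1: "degree ([:-b, \<beta>:] * ?G (Suc k)) \<le> Suc (Suc k)"
    using degree_mult_le[of "[:-b, \<beta>:]" "?G (Suc k)"] 3(2) l1 by linarith
  have "degree ([:a, -\<alpha>:] * ?G k) \<le> Suc k"
    using degree_mult_le[of "[:a, -\<alpha>:]" "?G k"] 3(1) l1 by linarith
  then have d2: "degree ([:a, -\<alpha>:] * ([:a, -\<alpha>:] * ?G k)) \<le> Suc (Suc k)"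
    using degree_mult_le[of "[:a, -\<alpha>:]" "[:a, -\<alpha>:] * ?G k"] l1 by linarith
  show ?case using degree_diff_le[OF d1 d2] by simp
qed (use assms in auto)

lemma coeff_lin: "coeff ([:l, u:] * G) (Suc k) = l * coeff G (Suc k) + u * coeff G k"
  by simp

lemma Gs_top:
  assumes d0: "degree G0 = 0" and d1: "degree G1 \<le> 1"
    and rec: "\<And>k. X (Suc (Suc k)) = - \<beta> * X (Suc k) - \<alpha>^2 * X k"
    and i0: "coeff G0 0 = X 0" and i1: "coeff G1 1 = - X 1"
  shows "coeff (Gs a b \<alpha> \<beta> G0 G1 k) k = (-1)^k * X k"
proof (induction k rule: twostep_induct)
  case (3 k)
  let ?G = "Gs a b \<alpha> \<beta> G0 G1"
  have z1: "coeff (?G (Suc k)) (Suc (Suc k)) = 0"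
    using Gs_degree[OF d0 d1, of a b \<alpha> \<beta> "Suc k"] by (simp add: coeff_eq_0)
  have z0: "coeff (?G k) (Suc k) = 0" "coeff (?G k) (Suc (Suc k)) = 0"
    using Gs_degree[OF d0 d1, of a b \<alpha> \<beta> k] by (auto simp add: coeff_eq_0)
  have "coeff (?G (Suc (Suc k))) (Suc (Suc k)) =
     \<beta> * coeff (?G (Suc k)) (Suc k) - \<alpha>^2 * coeff (?G k) k"
    by (simp only: Gs.simps coeff_diff coeff_lin z1 z0) (simp add: power2_eq_square)
  also have "\<dots> = (-1)^(Suc (Suc k)) * X (Suc (Suc k))"
    using 3 by (simp add: rec[of k] algebra_simps)
  finally show ?case .
qed (use i0 i1 in auto)

lemma Gs_hom:
  fixes a b \<alpha> \<beta> x y F :: "'a::comm_ring_1" and T :: "nat \<Rightarrow> 'a"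
  assumes d0: "degree G0 = 0" and d1: "degree G1 \<le> 1"
    and rec: "\<And>k. T (Suc (Suc k)) = (x^2 + y^2) * T (Suc k) - (x*y)^2 * T k"
    and i0: "T 0 = F * coeff G0 0"
    and i1: "(\<beta>*a - \<alpha>*b) * T 1 = F * hom 1 G1 (\<alpha>*x^2 + \<beta>*x*y + \<alpha>*y^2) (a*x^2 + b*x*y + a*y^2)"
  shows "(\<beta>*a - \<alpha>*b)^k * T k = F * hom k (Gs a b \<alpha> \<beta> G0 G1 k) (\<alpha>*x^2 + \<beta>*x*y + \<alpha>*y^2) (a*x^2 + b*x*y + a*y^2)"
proof (induction k rule: twostep_induct)
  case 1
  then show ?case using i0 by (simp add: hom_0)
next
  case 2
  then show ?case using i1 by simp
next
  case (3 k)
  let ?G = "Gs a b \<alpha> \<beta> G0 G1"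
  let ?A = "\<alpha>*x^2 + \<beta>*x*y + \<alpha>*y^2"
  let ?B = "a*x^2 + b*x*y + a*y^2"
  let ?D = "\<beta>*a - \<alpha>*b"
  have dk: "degree (?G k) \<le> k" and dk1: "degree (?G (Suc k)) \<le> Suc k"
    using Gs_degree[OF d0 d1] by blast+
  have "degree ([:a, -\<alpha>:] * ?G k) \<le> Suc k"
    using degree_mult_le[of "[:a, -\<alpha>:]" "?G k"] dk by (cases "\<alpha> = 0") auto
  then have h: "hom (Suc (Suc k)) (?G (Suc (Suc k))) ?A ?B =
    (-b * ?A + \<beta> * ?B) * hom (Suc k) (?G (Suc k)) ?A ?B
    - (a * ?A + -\<alpha> * ?B) * ((a * ?A + -\<alpha> * ?B) * hom k (?G k) ?A ?B)"
    by (simp only: Gs.simps hom_diff hom_lin dk dk1)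
  have w: "?D * (x^2 + y^2) = -b * ?A + \<beta> * ?B" by (simp add: algebra_simps power2_eq_square)
  have e: "?D * (x*y) = a * ?A + -\<alpha> * ?B" by (simp add: algebra_simps power2_eq_square)
  have "?D^(Suc (Suc k)) * T (Suc (Suc k)) =
     (?D * (x^2 + y^2)) * (?D^(Suc k) * T (Suc k)) - (?D * (x*y)) * ((?D * (x*y)) * (?D^k * T k))"
    by (simp add: rec algebra_simps power2_eq_square)
  also have "\<dots> = F * hom (Suc (Suc k)) (?G (Suc (Suc k))) ?A ?B"
    unfolding h w e 3 by (simp add: algebra_simps)
  finally show ?case .
qed

lemma pow_mod: "(X::'a::comm_ring_1) dvd (X + Y)^n - Y^n"
proof (induction n)
  case (Suc n)
  have "(X + Y)^(Suc n) - Y^(Suc n) = (X + Y) * ((X + Y)^n - Y^n) + X * Y^n"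
    by (simp add: algebra_simps)
  then show ?case using Suc by simp
qed simp

lemma indep:
  fixes a b \<alpha> \<beta> :: "'a::{idom,ring_char_0}"
  assumes D: "\<beta>*a - \<alpha>*b \<noteq> 0" and al: "\<alpha> \<noteq> 0"
  shows "(\<Sum>r\<le>m. smult (d r) ([:\<alpha>,\<beta>,\<alpha>:]^(m-r) * [:a,b,a:]^r)) = 0 \<Longrightarrow> \<forall>r\<le>m. d r = 0"
proof (induction m arbitrary: d)
  case 0
  then show ?case by simp
next
  case (Suc m)
  define P1 where "P1 = [:\<alpha>,\<beta>,\<alpha>:]"
  define P2 where "P2 = [:a,b,a:]"
  define D where "D = \<beta>*a - \<alpha>*b"
  define S' where "S' = (\<Sum>r\<le>m. smult (d r) (P1^(m-r) * P2^r))"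
  have split: "(\<Sum>r\<le>Suc m. smult (d r) (P1^(Suc m-r) * P2^r)) = P1 * S' + smult (d (Suc m)) (P2^(Suc m))"
  proof -
    have "(\<Sum>r\<le>m. smult (d r) (P1^(Suc m-r) * P2^r)) = (\<Sum>r\<le>m. P1 * smult (d r) (P1^(m-r) * P2^r))"
      by (rule sum.cong) (auto simp: Suc_diff_le algebra_simps)
    then show ?thesis by (simp add: S'_def sum_distrib_left)
  qed
  have S0: "P1 * S' + smult (d (Suc m)) (P2^(Suc m)) = 0"
    using Suc.prems split unfolding P1_def P2_def by simp
  define U where "U = [:-D*b:] - smult (a^2) P1 + smult (2*a*\<alpha>) P2"
  define V where "V = [:D*\<beta>:] - smult (\<alpha>^2) P2"
  have bez: "U * P1 + V * P2 = [:D^2:]"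
    unfolding poly_eq_poly_eq_iff[symmetric]
    by (rule ext) (simp add: U_def V_def P1_def P2_def D_def algebra_simps power2_eq_square)
  have dv1: "P1 dvd smult (d (Suc m)) (P2^(Suc m))"
  proof -
    have "smult (d (Suc m)) (P2^(Suc m)) = P1 * (- S')" using S0 by (simp add: eq_neg_iff_add_eq_0 add.commute)
    then show ?thesis by simp
  qed
  have dv2: "P1 dvd [:d (Suc m):] * ((U * P1 + V * P2)^(Suc m) - (V*P2)^(Suc m))"
    using pow_mod[of "U * P1" "V * P2" "Suc m"] by (meson dvd_mult dvd_mult_left dvd_refl dvd_trans)
  have dv3: "P1 dvd [:d (Suc m):] * (V*P2)^(Suc m)"
  proof -
    have "[:d (Suc m):] * (V*P2)^(Suc m) = V^(Suc m) * smult (d (Suc m)) (P2^(Suc m))"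
      by (simp add: power_mult_distrib algebra_simps)
    then show ?thesis using dv1 by (metis dvd_mult)
  qed
  have "P1 dvd [:d (Suc m):] * (U * P1 + V * P2)^(Suc m)"
    using dvd_add[OF dv2 dv3] by (simp add: algebra_simps)
  then have dvc: "P1 dvd [:d (Suc m) * (D^2)^(Suc m):]"
    unfolding bez by (simp add: poly_const_pow mult_ac)
  have degP1: "degree P1 = 2" using al by (simp add: P1_def)
  have "[:d (Suc m) * (D^2)^(Suc m):] = 0"
  proof (rule ccontr)
    assume "[:d (Suc m) * (D^2)^(Suc m):] \<noteq> 0"
    from dvd_imp_degree_le[OF dvc this] degP1 show False by simp
  qed
  then have dz: "d (Suc m) = 0" using D by (simp add: D_def)
  have "P1 \<noteq> 0" using al by (simp add: P1_def)
  then have "S' = 0" using S0 dz by simp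
  then have "\<forall>r\<le>m. d r = 0" using Suc.IH unfolding S'_def P1_def P2_def by blast
  then show ?case using dz le_Suc_eq by auto
qed

lemma uniq_poly:
  fixes a b \<alpha> \<beta> :: "'a::{idom,ring_char_0}" and Fp :: "'a poly"
  assumes Fp: "Fp \<noteq> 0" and D: "\<beta>*a - \<alpha>*b \<noteq> 0" and al: "\<alpha> \<noteq> 0"
    and h: "\<And>z. poly Fp z * (\<Sum>r\<le>m. d r * (\<alpha>*z^2 + \<beta>*z*1 + \<alpha>*1^2)^(m-r) * (a*z^2 + b*z*1 + a*1^2)^r) = 0"
  shows "\<forall>r\<le>m. d r = 0"
proof -
  define S where "S = (\<Sum>r\<le>m. smult (d r) ([:\<alpha>,\<beta>,\<alpha>:]^(m-r) * [:a,b,a:]^r))"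
  have "poly (Fp * S) z = 0" for z
  proof -
    have "poly S z = (\<Sum>r\<le>m. d r * (\<alpha>*z^2 + \<beta>*z*1 + \<alpha>*1^2)^(m-r) * (a*z^2 + b*z*1 + a*1^2)^r)"
      unfolding S_def poly_sum
      by (rule sum.cong) (simp_all add: poly_power algebra_simps power2_eq_square)
    then show ?thesis using h[of z] by simp
  qed
  then have "Fp * S = 0" using poly_all_0_iff_0 by blast
  then have "S = 0" using Fp by simp
  then show ?thesis using indep[OF D al] unfolding S_def by blast
qed

lemma the_coef:
  fixes a b \<alpha> \<beta> :: "'a::{idom,ring_char_0}" and Fp :: "'a poly"
    and F L :: "'a \<Rightarrow> 'a \<Rightarrow> 'a"
  assumes D: "\<beta>*a - \<alpha>*b \<noteq> 0" and al: "\<alpha> \<noteq> 0" and Fp: "Fp \<noteq> 0"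
    and FF: "\<And>z. F z 1 = poly Fp z"
    and deg: "degree G \<le> m"
    and ex: "\<And>x y. L x y = F x y * hom m G (\<alpha>*x^2 + \<beta>*x*y + \<alpha>*y^2) (a*x^2 + b*x*y + a*y^2)"
  shows "(THE c. (\<forall>r. m < r \<longrightarrow> c r = 0) \<and>
     (\<forall>x y. L x y = F x y *
        (\<Sum>r\<le>m. c r * (\<alpha>*x^2 + \<beta>*x*y + \<alpha>*y^2) ^ (m - r)
                           * (a*x^2 + b*x*y + a*y^2) ^ r))) = coeff G"
proof (rule the_equality)
  show "(\<forall>r. m < r \<longrightarrow> coeff G r = 0) \<and>
     (\<forall>x y. L x y = F x y *
        (\<Sum>r\<le>m. coeff G r * (\<alpha>*x^2 + \<beta>*x*y + \<alpha>*y^2) ^ (m - r)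
                           * (a*x^2 + b*x*y + a*y^2) ^ r))"
    using deg ex by (auto simp: coeff_eq_0 hom_def)
next
  fix c
  assume c: "(\<forall>r. m < r \<longrightarrow> c r = 0) \<and>
     (\<forall>x y. L x y = F x y *
        (\<Sum>r\<le>m. c r * (\<alpha>*x^2 + \<beta>*x*y + \<alpha>*y^2) ^ (m - r)
                           * (a*x^2 + b*x*y + a*y^2) ^ r))"
  define d where "d r = c r - coeff G r" for r
  have "poly Fp z * (\<Sum>r\<le>m. d r * (\<alpha>*z^2 + \<beta>*z*1 + \<alpha>*1^2)^(m-r) * (a*z^2 + b*z*1 + a*1^2)^r) = 0" for z
  proof -
    have "L z 1 - L z 1 = F z 1 * (\<Sum>r\<le>m. c r * (\<alpha>*z^2 + \<beta>*z*1 + \<alpha>*1^2)^(m-r) * (a*z^2 + b*z*1 + a*1^2)^r)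
       - F z 1 * (\<Sum>r\<le>m. coeff G r * (\<alpha>*z^2 + \<beta>*z*1 + \<alpha>*1^2)^(m-r) * (a*z^2 + b*z*1 + a*1^2)^r)"
      using c ex[of z 1] unfolding hom_def by metis
    then show ?thesis unfolding d_def FF
      by (simp add: algebra_simps sum_subtractf[symmetric] right_diff_distrib[symmetric])
  qed
  then have "\<forall>r\<le>m. d r = 0" by (rule uniq_poly[OF Fp D al])
  then have eq: "\<forall>r\<le>m. c r = coeff G r" by (simp add: d_def)
  show "c = coeff G"
  proof
    fix r show "c r = coeff G r"
    proof (cases "r \<le> m")
      case False
      then show ?thesis using c deg by (simp add: coeff_eq_0 not_le)
    qed (use eq in auto)
  qed
qed

lemma delta_0: "delta 0 = 0" by (simp add: delta_def)
lemma delta_Suc: "delta (Suc n) = 1 - delta n" by (simp add: delta_def)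

lemma Psi_rec4: "Psi a b (Suc (Suc (Suc (Suc n)))) = - b * Psi a b (Suc (Suc n)) - a^2 * Psi a b n"
  by (cases "even n") (simp_all add: delta_def algebra_simps power2_eq_square)

lemma Phi_rec4: "Phi a b (Suc (Suc (Suc (Suc n)))) = - b * Phi a b (Suc (Suc n)) - a^2 * Phi a b n"
  by (cases "even n") (simp_all add: delta_def algebra_simps power2_eq_square)

lemma R4_facts: "Xbeta * Xa - Xalpha * Xb \<noteq> 0" "Xalpha \<noteq> 0"
  unfolding Xa_def Xb_def Xalpha_def Xbeta_def by simp_all

lemma Psi_even:
  fixes a b \<alpha> \<beta> :: "'a::{idom,ring_char_0}"
  assumes D: "\<beta>*a - \<alpha>*b \<noteq> 0" and al: "\<alpha> \<noteq> 0" and n: "n = 2*m"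
  shows "Psi_coef a b \<alpha> \<beta> n (n div 2) = (-1)^(n div 2) * Psi \<alpha> \<beta> n"
proof -
  define G where "G = Gs a b \<alpha> \<beta> [:2:] [:-b, \<beta>:] m"
  have d0: "degree [:2::'a:] = 0" and d1: "degree [:-b, \<beta>:] \<le> 1" by auto
  have nd: "n div 2 = m" "delta n = 0" using n by (auto simp: delta_def)
  have "Psi_coef a b \<alpha> \<beta> n = coeff G"
    unfolding Psi_coef_def nd
  proof (rule the_coef[OF D al, where Fp=1])
    show "degree G \<le> m" unfolding G_def by (rule Gs_degree[OF d0 d1])
    fix x y :: 'a
    have main: "(\<beta>*a - \<alpha>*b)^m * ((x^2)^m + (y^2)^m) = 1 * hom m G (\<alpha>*x^2 + \<beta>*x*y + \<alpha>*y^2) (a*x^2 + b*x*y + a*y^2)"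
      unfolding G_def
      by (rule Gs_hom[OF d0 d1, where T="\<lambda>k. (x^2)^k + (y^2)^k"])
         (simp_all add: hom_def algebra_simps power2_eq_square)
    then show "(\<beta>*a - \<alpha>*b)^m * (x^n + y^n) = (x + y)^0 * hom m G (\<alpha>*x^2 + \<beta>*x*y + \<alpha>*y^2) (a*x^2 + b*x*y + a*y^2)"
      using n by (simp add: power_mult)
  qed (simp_all add: algebra_simps)
  moreover have "coeff G m = (-1)^m * Psi \<alpha> \<beta> (2*m)"
    unfolding G_def
  proof (rule Gs_top[OF d0 d1, where X="\<lambda>k. Psi \<alpha> \<beta> (2*k)"])
    fix k
    have e: "2*Suc(Suc k) = Suc(Suc(Suc(Suc(2*k))))" "2*Suc k = Suc(Suc(2*k))" by simp_all
    show "Psi \<alpha> \<beta> (2*Suc(Suc k)) = - \<beta> * Psi \<alpha> \<beta> (2*Suc k) - \<alpha>^2 * Psi \<alpha> \<beta> (2*k)"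
      by (simp only: e Psi_rec4)
  qed (simp_all add: numeral_2_eq_2 delta_def)
  ultimately show ?thesis using n nd by simp
qed

lemma Psi_odd:
  fixes a b \<alpha> \<beta> :: "'a::{idom,ring_char_0}"
  assumes D: "\<beta>*a - \<alpha>*b \<noteq> 0" and al: "\<alpha> \<noteq> 0" and n: "n = 2*m+1"
  shows "Psi_coef a b \<alpha> \<beta> n (n div 2) = (-1)^(n div 2) * Psi \<alpha> \<beta> n"
proof -
  define G where "G = Gs a b \<alpha> \<beta> [:1:] [:-a-b, \<alpha>+\<beta>:] m"
  have d0: "degree [:1::'a:] = 0" and d1: "degree [:-a-b, \<alpha>+\<beta>:] \<le> 1" by auto
  have nd: "n div 2 = m" "delta (n) = 1" using n by (auto simp: delta_def)
  have "Psi_coef a b \<alpha> \<beta> n = coeff G"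
    unfolding Psi_coef_def nd
  proof (rule the_coef[OF D al, where Fp="[:1,1:]"])
    show "degree G \<le> m" unfolding G_def by (rule Gs_degree[OF d0 d1])
    fix x y :: 'a
    have main: "(\<beta>*a - \<alpha>*b)^m * (x*(x^2)^m + y*(y^2)^m) = (x+y) * hom m G (\<alpha>*x^2 + \<beta>*x*y + \<alpha>*y^2) (a*x^2 + b*x*y + a*y^2)"
      unfolding G_def
      by (rule Gs_hom[OF d0 d1, where T="\<lambda>k. x*(x^2)^k + y*(y^2)^k"])
         (simp_all add: hom_def algebra_simps power2_eq_square)
    then show "(\<beta>*a - \<alpha>*b)^m * (x^n + y^n) = (x + y)^1 * hom m G (\<alpha>*x^2 + \<beta>*x*y + \<alpha>*y^2) (a*x^2 + b*x*y + a*y^2)"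
    proof -
      have "x^n = x*(x^2)^m" "y^n = y*(y^2)^m" using n by (simp_all add: power_mult[symmetric])
      then show ?thesis using main by simp
    qed
  qed (simp_all add: algebra_simps)
  moreover have "coeff G m = (-1)^m * Psi \<alpha> \<beta> ((\<lambda>k. 2*k+1) m)"
    unfolding G_def
  proof (rule Gs_top[OF d0 d1, where X="\<lambda>k. Psi \<alpha> \<beta> ((\<lambda>k. 2*k+1) k)"])
    fix k
    have e: "(\<lambda>k. 2*k+1) (Suc(Suc k)) = Suc(Suc(Suc(Suc((\<lambda>k. 2*k+1) k))))" "(\<lambda>k. 2*k+1) (Suc k) = Suc(Suc((\<lambda>k. 2*k+1) k))" by simp_all
    show "Psi \<alpha> \<beta> ((\<lambda>k. 2*k+1) (Suc(Suc k))) = - \<beta> * Psi \<alpha> \<beta> ((\<lambda>k. 2*k+1) (Suc k)) - \<alpha>^2 * Psi \<alpha> \<beta> ((\<lambda>k. 2*k+1) k)"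
      by (simp only: e Psi_rec4)
  qed (simp_all add: numeral_2_eq_2 numeral_3_eq_3 eval_nat_numeral delta_0 delta_Suc)
  ultimately show ?thesis using n nd by simp
qed

lemma Phi_odd:
  fixes a b \<alpha> \<beta> :: "'a::{idom,ring_char_0}"
  assumes D: "\<beta>*a - \<alpha>*b \<noteq> 0" and al: "\<alpha> \<noteq> 0" and n: "n = 2*m+1"
  shows "Phi_coef a b \<alpha> \<beta> n ((n - 1) div 2) = (-1)^((n - 1) div 2) * Phi \<alpha> \<beta> n"
proof -
  define G where "G = Gs a b \<alpha> \<beta> [:1:] [:a-b, \<beta>-\<alpha>:] m"
  have d0: "degree [:1::'a:] = 0" and d1: "degree [:a-b, \<beta>-\<alpha>:] \<le> 1" by auto
  have nd: "(n - 1) div 2 = m" "delta (n - 1) = 0" using n by (auto simp: delta_def)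
  have "Phi_coef a b \<alpha> \<beta> n = coeff G"
    unfolding Phi_coef_def nd
  proof (rule the_coef[OF D al, where Fp="[:-1,1:]"])
    show "degree G \<le> m" unfolding G_def by (rule Gs_degree[OF d0 d1])
    fix x y :: 'a
    have main: "(\<beta>*a - \<alpha>*b)^m * (x*(x^2)^m - y*(y^2)^m) = (x-y) * hom m G (\<alpha>*x^2 + \<beta>*x*y + \<alpha>*y^2) (a*x^2 + b*x*y + a*y^2)"
      unfolding G_def
      by (rule Gs_hom[OF d0 d1, where T="\<lambda>k. x*(x^2)^k - y*(y^2)^k"])
         (simp_all add: hom_def algebra_simps power2_eq_square)
    then show "(\<beta>*a - \<alpha>*b)^m * (x^n - y^n) = (x - y) * (x + y)^0 * hom m G (\<alpha>*x^2 + \<beta>*x*y + \<alpha>*y^2) (a*x^2 + b*x*y + a*y^2)"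
    proof -
      have "x^n = x*(x^2)^m" "y^n = y*(y^2)^m" using n by (simp_all add: power_mult[symmetric])
      then show ?thesis using main by simp
    qed
  qed (simp_all add: algebra_simps)
  moreover have "coeff G m = (-1)^m * Phi \<alpha> \<beta> ((\<lambda>k. 2*k+1) m)"
    unfolding G_def
  proof (rule Gs_top[OF d0 d1, where X="\<lambda>k. Phi \<alpha> \<beta> ((\<lambda>k. 2*k+1) k)"])
    fix k
    have e: "(\<lambda>k. 2*k+1) (Suc(Suc k)) = Suc(Suc(Suc(Suc((\<lambda>k. 2*k+1) k))))" "(\<lambda>k. 2*k+1) (Suc k) = Suc(Suc((\<lambda>k. 2*k+1) k))" by simp_all
    show "Phi \<alpha> \<beta> ((\<lambda>k. 2*k+1) (Suc(Suc k))) = - \<beta> * Phi \<alpha> \<beta> ((\<lambda>k. 2*k+1) (Suc k)) - \<alpha>^2 * Phi \<alpha> \<beta> ((\<lambda>k. 2*k+1) k)"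
      by (simp only: e Phi_rec4)
  qed (simp_all add: numeral_2_eq_2 numeral_3_eq_3 eval_nat_numeral delta_0 delta_Suc)
  ultimately show ?thesis using n nd by simp
qed

lemma Phi_even:
  fixes a b \<alpha> \<beta> :: "'a::{idom,ring_char_0}"
  assumes D: "\<beta>*a - \<alpha>*b \<noteq> 0" and al: "\<alpha> \<noteq> 0" and n: "n = 2*m+2"
  shows "Phi_coef a b \<alpha> \<beta> n ((n - 1) div 2) = (-1)^((n - 1) div 2) * Phi \<alpha> \<beta> n"
proof -
  define G where "G = Gs a b \<alpha> \<beta> [:1:] [:-b, \<beta>:] m"
  have d0: "degree [:1::'a:] = 0" and d1: "degree [:-b, \<beta>:] \<le> 1" by auto
  have nd: "(n - 1) div 2 = m" "delta (n - 1) = 1" using n by (auto simp: delta_def)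
  have "Phi_coef a b \<alpha> \<beta> n = coeff G"
    unfolding Phi_coef_def nd
  proof (rule the_coef[OF D al, where Fp="[:-1,1:]*[:1,1:]"])
    show "degree G \<le> m" unfolding G_def by (rule Gs_degree[OF d0 d1])
    fix x y :: 'a
    have main: "(\<beta>*a - \<alpha>*b)^m * ((x^2)^Suc m - (y^2)^Suc m) = ((x-y)*(x+y)) * hom m G (\<alpha>*x^2 + \<beta>*x*y + \<alpha>*y^2) (a*x^2 + b*x*y + a*y^2)"
      unfolding G_def
      by (rule Gs_hom[OF d0 d1, where T="\<lambda>k. (x^2)^Suc k - (y^2)^Suc k"])
         (simp_all add: hom_def algebra_simps power2_eq_square)
    then show "(\<beta>*a - \<alpha>*b)^m * (x^n - y^n) = (x - y) * (x + y)^1 * hom m G (\<alpha>*x^2 + \<beta>*x*y + \<alpha>*y^2) (a*x^2 + b*x*y + a*y^2)"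
    proof -
      have "x^n = (x^2)^Suc m" "y^n = (y^2)^Suc m" using n by (simp_all only: power_mult[symmetric]) simp_all
      then show ?thesis using main by simp
    qed
  qed (simp_all add: algebra_simps)
  moreover have "coeff G m = (-1)^m * Phi \<alpha> \<beta> ((\<lambda>k. 2*k+2) m)"
    unfolding G_def
  proof (rule Gs_top[OF d0 d1, where X="\<lambda>k. Phi \<alpha> \<beta> ((\<lambda>k. 2*k+2) k)"])
    fix k
    have e: "(\<lambda>k. 2*k+2) (Suc(Suc k)) = Suc(Suc(Suc(Suc((\<lambda>k. 2*k+2) k))))" "(\<lambda>k. 2*k+2) (Suc k) = Suc(Suc((\<lambda>k. 2*k+2) k))" by simp_all
    show "Phi \<alpha> \<beta> ((\<lambda>k. 2*k+2) (Suc(Suc k))) = - \<beta> * Phi \<alpha> \<beta> ((\<lambda>k. 2*k+2) (Suc k)) - \<alpha>^2 * Phi \<alpha> \<beta> ((\<lambda>k. 2*k+2) k)"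
      by (simp only: e Phi_rec4)
  qed (simp_all add: numeral_2_eq_2 numeral_3_eq_3 eval_nat_numeral delta_0 delta_Suc)
  ultimately show ?thesis using n nd by simp
qed

theorem theorem6p1:
  fixes n :: nat
  assumes "n \<ge> 1"
  shows "Psi_coef Xa Xb Xalpha Xbeta n (n div 2) = (-1) ^ (n div 2) * Psi Xalpha Xbeta n
       \<and> Phi_coef Xa Xb Xalpha Xbeta n ((n - 1) div 2) = (-1) ^ ((n - 1) div 2) * Phi Xalpha Xbeta n"
proof
  show "Psi_coef Xa Xb Xalpha Xbeta n (n div 2) = (-1) ^ (n div 2) * Psi Xalpha Xbeta n"
  proof (cases "even n")
    case True
    then obtain m where "n = 2*m" by blast
    then show ?thesis using Psi_even[OF R4_facts] by blast
  next
    case False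
    then obtain m where "n = 2*m+1" using oddE by blast
    then show ?thesis using Psi_odd[OF R4_facts] by blast
  qed
  show "Phi_coef Xa Xb Xalpha Xbeta n ((n - 1) div 2) = (-1) ^ ((n - 1) div 2) * Phi Xalpha Xbeta n"
  proof (cases "odd n")
    case True
    then obtain m where "n = 2*m+1" using oddE by blast
    then show ?thesis using Phi_odd[OF R4_facts] by blast
  next
    case False
    then obtain k where k: "n = 2*k" by blast
    with assms obtain m where "n = 2*m+2" by (cases k) auto
    then show ?thesis using Phi_even[OF R4_facts] by blast
  qed
qed

end
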